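(* Let $N\ge1$ and $\varphi,\psi\in\mathbb{C}^N$ be such that for $k=0,\ldots,2N-2$, $$\Big|P_\varphi\Big(\tfrac{k}{2N-1}\Big)\Big|=\Big|P_\psi\Big(\tfrac{k}{2N-1}\Big)\Big|$$ and $$\Big|P_\varphi\Big(\tfrac{k+1}{2N-1}\Big)-P_\varphi\Big(\tfrac{k}{2N-1}\Big)\Big|=\Big|P_\psi\Big(\tfrac{k+1}{2N-1}\Big)-P_\psi\Big(\tfrac{k}{2N-1}\Big)\Big|.$$ Then there exists $\lambda\in\mathbb{C}$ with $|\lambda|=1$ such that $\psi=\lambda\varphi$.
   Context: For $\psi=(\psi_0,\ldots,\psi_{N-1})\in\mathbb{C}^N$, $P_\psi(x)=\sum_{j=0}^{N-1}\psi_je^{2i\pi jx}$ for $x\in\mathbb{R}$ (a $1$-periodic function). *)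

theory Defs
  imports Complex_Main
begin

text \<open>Vectors in C^N are represented as functions nat \<Rightarrow> complex, only indices j < N matter.
  P_psi(x) = sum_{j=0}^{N-1} psi_j e^{2 i pi j x}.\<close>
definition trig_poly :: "nat \<Rightarrow> (nat \<Rightarrow> complex) \<Rightarrow> real \<Rightarrow> complex" where
  "trig_poly N \<psi> x = (\<Sum>j<N. \<psi> j * exp (2 * \<i> * complex_of_real pi * of_nat j * complex_of_real x))"

end

theory Submission imports Defs "HOL-Computational_Algebra.Polynomial" "HOL-Analysis.Analysis" begin

definition pp :: "nat \<Rightarrow> (nat \<Rightarrow> complex) \<Rightarrow> complex poly" where
  "pp N f = (\<Sum>j<N. monom (f j) j)"
definition pr :: "nat \<Rightarrow> (nat \<Rightarrow> complex) \<Rightarrow> complex poly" where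
  "pr N f = (\<Sum>j<N. monom (cnj (f j)) (N-1-j))"
definition pw :: "nat \<Rightarrow> complex \<Rightarrow> (nat \<Rightarrow> complex) \<Rightarrow> complex poly" where
  "pw N w f = (\<Sum>j<N. monom (f j * w^j) j)"
definition prw :: "nat \<Rightarrow> complex \<Rightarrow> (nat \<Rightarrow> complex) \<Rightarrow> complex poly" where
  "prw N w f = (\<Sum>j<N. monom (cnj (f j) * w^(N-1-j)) (N-1-j))"

lemma poly_pp: "poly (pp N f) z = (\<Sum>j<N. f j * z^j)"
  by (simp add: pp_def poly_sum poly_monom)
lemma poly_pw: "poly (pw N w f) z = poly (pp N f) (w*z)"
  by (simp add: pp_def pw_def poly_sum poly_monom power_mult_distrib mult.assoc)
lemma poly_pr: "poly (pr N f) z = (\<Sum>j<N. cnj (f j) * z^(N-1-j))"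
  by (simp add: pr_def poly_sum poly_monom)
lemma poly_prw: "poly (prw N w f) z = poly (pr N f) (w*z)"
  by (simp add: pr_def prw_def poly_sum poly_monom power_mult_distrib mult.assoc)

lemma poly_pr_circle:
  assumes "cmod w = 1"
  shows "poly (pr N f) w = w^(N-1) * cnj (poly (pp N f) w)"
proof -
  have "cnj w * w = 1" using assms
    by (metis complex_norm_square mult.commute of_real_1 power_one)
  have *: "w^(N-1-j) = w^(N-1) * cnj w ^ j" if "j < N" for j
  proof -
    have "w^(N-1) = w^(N-1-j) * w^j" using that by (simp add: power_add[symmetric])
    hence "w^(N-1) * cnj w ^ j = w^(N-1-j) * (cnj w * w)^j" by (simp add: power_mult_distrib)
    thus ?thesis using \<open>cnj w * w = 1\<close> by simp
  qed
  have "(\<Sum>j<N. cnj (f j) * w^(N-1-j)) = (\<Sum>j<N. cnj (f j) * (w^(N-1) * cnj w ^ j))"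
  proof (intro sum.cong refl)
    fix j assume "j \<in> {..<N}"
    thus "cnj (f j) * w^(N-1-j) = cnj (f j) * (w^(N-1) * cnj w ^ j)" using *[of j] by simp
  qed
  thus ?thesis
    by (simp add: poly_pr poly_pp sum_distrib_left mult_ac)
qed

lemma coeff_pp: "coeff (pp N f) i = (if i < N then f i else 0)"
  by (simp add: pp_def coeff_sum coeff_monom)
lemma coeff_pw: "coeff (pw N w f) i = (if i < N then f i * w^i else 0)"
  by (simp add: pw_def coeff_sum coeff_monom)
lemma coeff_pr: "coeff (pr N f) i = (if i < N then cnj (f (N-1-i)) else 0)"
proof -
  have "coeff (pr N f) i = (\<Sum>j<N. if j = N-1-i \<and> i < N then cnj (f j) else 0)"
    unfolding pr_def coeff_sum coeff_monom by (intro sum.cong) auto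
  also have "\<dots> = (if i < N then cnj (f (N-1-i)) else 0)"
    by (cases "i < N") auto
  finally show ?thesis .
qed
lemma coeff_prw: "coeff (prw N w f) i = (if i < N then cnj (f (N-1-i)) * w^i else 0)"
proof -
  have "coeff (prw N w f) i = (\<Sum>j<N. if j = N-1-i \<and> i < N then cnj (f j) * w^(N-1-j) else 0)"
    unfolding prw_def coeff_sum coeff_monom by (intro sum.cong) auto
  also have "\<dots> = (if i < N then cnj (f (N-1-i)) * w^i else 0)"
    by (cases "i < N") auto
  finally show ?thesis .
qed

lemma deg_pp: "degree (pp N f) \<le> N - 1" by (rule degree_le) (auto simp: coeff_pp)
lemma deg_pw: "degree (pw N w f) \<le> N - 1" by (rule degree_le) (auto simp: coeff_pw)
lemma deg_pr: "degree (pr N f) \<le> N - 1" by (rule degree_le) (auto simp: coeff_pr)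
lemma deg_prw: "degree (prw N w f) \<le> N - 1" by (rule degree_le) (auto simp: coeff_prw)

lemma coeff_mult_low:
  fixes p q :: "complex poly"
  assumes "\<forall>i<a. coeff p i = 0" "\<forall>j<b. coeff q j = 0"
  shows "coeff (p*q) (a+b) = coeff p a * coeff q b"
proof -
  have "coeff (p*q) (a+b) = (\<Sum>i\<le>a+b. if i = a then coeff p a * coeff q b else 0)"
    unfolding coeff_mult
  proof (intro sum.cong refl)
    fix i assume "i \<in> {..a+b}"
    show "coeff p i * coeff q (a + b - i) = (if i = a then coeff p a * coeff q b else 0)"
    proof (cases "i < a")
      case False
      show ?thesis
      proof (cases "i = a")
        case False
        with \<open>\<not> i < a\<close> \<open>i \<in> {..a+b}\<close> have "a + b - i < b" by auto
        thus ?thesis using assms False by auto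
      qed simp
    qed (use assms in auto)
  qed
  thus ?thesis by simp
qed

lemma coeff_mult_high:
  fixes p q :: "complex poly"
  assumes "\<forall>i>a. coeff p i = 0" "\<forall>j>b. coeff q j = 0"
  shows "coeff (p*q) (a+b) = coeff p a * coeff q b"
proof -
  have "coeff (p*q) (a+b) = (\<Sum>i\<le>a+b. if i = a then coeff p a * coeff q b else 0)"
    unfolding coeff_mult
  proof (intro sum.cong refl)
    fix i assume "i \<in> {..a+b}"
    show "coeff p i * coeff q (a + b - i) = (if i = a then coeff p a * coeff q b else 0)"
    proof (cases "i < a")
      case True
      hence "a + b - i > b" using \<open>i \<in> {..a+b}\<close> by auto
      thus ?thesis using assms True by auto
    next
      case False
      thus ?thesis using assms by (cases "i = a") auto
    qed
  qed
  thus ?thesis by simp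
qed

lemma om_pow:
  "exp (2 * of_real pi * \<i> / of_nat M) ^ j = exp (2 * of_real pi * \<i> * of_nat j / of_nat M)"
proof -
  have "exp (2 * of_real pi * \<i> / of_nat M) ^ j = exp (of_nat j * (2 * of_real pi * \<i> / of_nat M))"
    by (rule exp_of_nat_mult[symmetric])
  also have "of_nat j * (2 * of_real pi * \<i> / of_nat M) = 2 * of_real pi * \<i> * of_nat j / (of_nat M :: complex)"
    by simp
  finally show ?thesis .
qed

lemma om_eq:
  assumes "M \<ge> 1"
  shows "exp (2 * of_real pi * \<i> / of_nat M) ^ j = exp (2 * of_real pi * \<i> / of_nat M) ^ k
     \<longleftrightarrow> j mod M = k mod M"
  unfolding om_pow using complex_root_unity_eq[OF assms] by simp

lemma om_norm: "cmod (exp (2 * of_real pi * \<i> / of_nat M) ^ j) = 1"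
  by (simp add: norm_power)

lemma trig_poly_pp:
  assumes "M \<ge> 1"
  shows "trig_poly N f (real k / real M) = poly (pp N f) (exp (2 * of_real pi * \<i> / of_nat M) ^ k)"
proof -
  have "exp (2 * \<i> * complex_of_real pi * of_nat j * complex_of_real (real k / real M))
     = (exp (2 * of_real pi * \<i> / of_nat M) ^ k) ^ j" for j
  proof -
    have "(exp (2 * of_real pi * \<i> / of_nat M) ^ k) ^ j = exp (2 * of_real pi * \<i> * of_nat (k*j) / of_nat M)"
      by (subst power_mult[symmetric], subst om_pow) simp
    also have "2 * of_real pi * \<i> * of_nat (k*j) / of_nat M = 2 * \<i> * complex_of_real pi * of_nat j * complex_of_real (real k / real M)"
      by simp
    finally show ?thesis by simp
  qed
  thus ?thesis unfolding trig_poly_def poly_pp by simp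
qed

lemma poly_eq_roots:
  fixes p q :: "complex poly"
  assumes "degree p < M" "degree q < M" "\<forall>k<M. poly p (w^k) = poly q (w^k)"
    "inj_on (\<lambda>k. w^k) {..<M}"
  shows "p = q"
proof (rule poly_eqI_degree[where A = "(\<lambda>k. w^k) ` {..<M}"])
  show "card ((\<lambda>k. w^k) ` {..<M}) > degree p" "card ((\<lambda>k. w^k) ` {..<M}) > degree q"
    using assms by (simp_all add: card_image)
qed (use assms in auto)

lemma key_product:
  fixes \<phi> \<psi> :: "nat \<Rightarrow> complex"
  assumes T: "pp N \<phi> * pr N \<phi> = pp N \<psi> * pr N \<psi>"
    and S: "pw N w \<phi> * pr N \<phi> + smult c (pp N \<phi> * prw N w \<phi>)
          = pw N w \<psi> * pr N \<psi> + smult c (pp N \<psi> * prw N w \<psi>)"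
  shows "(pw N w \<psi> * pp N \<phi> - pp N \<psi> * pw N w \<phi>) *
         (pr N \<phi> * pw N w \<psi> - smult c (prw N w \<phi> * pp N \<psi>)) = 0"
proof -
  have "poly ((pw N w \<psi> * pp N \<phi> - pp N \<psi> * pw N w \<phi>) *
         (pr N \<phi> * pw N w \<psi> - smult c (prw N w \<phi> * pp N \<psi>))) z = 0" for z
  proof -
    define b where "b = poly (pp N \<phi>) z"
    define bs where "bs = poly (pr N \<phi>) z"
    define a where "a = poly (pw N w \<phi>) z"
    define as where "as = poly (prw N w \<phi>) z"
    define d where "d = poly (pp N \<psi>) z"
    define ds where "ds = poly (pr N \<psi>) z"
    define e where "e = poly (pw N w \<psi>) z"
    define es where "es = poly (prw N w \<psi>) z"
    have h1: "b * bs = d * ds" unfolding b_def bs_def d_def ds_def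
      using arg_cong[OF T, of "\<lambda>p. poly p z"] by simp
    have h2: "a * as = e * es" unfolding a_def as_def e_def es_def poly_pw poly_prw
      using arg_cong[OF T, of "\<lambda>p. poly p (w*z)"] by simp
    have h3: "a * bs + c * (b * as) = e * ds + c * (d * es)"
      unfolding a_def as_def e_def es_def b_def bs_def d_def ds_def
      using arg_cong[OF S, of "\<lambda>p. poly p z"] by simp
    have "(e * b - d * a) * (bs * e - c * (as * d)) = 0"
      using h1 h2 h3 by algebra
    thus ?thesis unfolding a_def as_def e_def es_def b_def bs_def d_def ds_def by simp
  qed
  thus ?thesis using poly_all_0_iff_0 by blast
qed

lemma cnj_id: "a * cnj b + b * cnj a = complex_of_real (cmod a^2 + cmod b^2 - cmod (a-b)^2)"
  by (simp only: of_real_add of_real_diff complex_norm_square) (simp add: algebra_simps)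

lemma coeff_pw_pp: "coeff (pw N w f) i = coeff (pp N f) i * w^i"
  by (simp add: coeff_pw coeff_pp)
lemma coeff_prw_pr: "coeff (prw N w f) i = coeff (pr N f) i * w^i"
  by (simp add: coeff_prw coeff_pr)

lemma pp_zero_iff: "pp N f = 0 \<longleftrightarrow> (\<forall>j<N. f j = 0)"
proof
  assume "pp N f = 0"
  thus "\<forall>j<N. f j = 0" using coeff_pp[of N f] by (metis coeff_0)
next
  assume "\<forall>j<N. f j = 0"
  thus "pp N f = 0" by (intro poly_eqI) (simp add: coeff_pp)
qed

lemma pr_zero_iff: "pr N f = 0 \<longleftrightarrow> (\<forall>j<N. f j = 0)"
proof
  assume h: "pr N f = 0"
  show "\<forall>j<N. f j = 0"
  proof (intro allI impI)
    fix j assume "j < N"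
    hence "coeff (pr N f) (N-1-j) = cnj (f j)" by (simp add: coeff_pr)
    thus "f j = 0" using h by simp
  qed
next
  assume "\<forall>j<N. f j = 0"
  thus "pr N f = 0" by (intro poly_eqI) (simp add: coeff_pr)
qed

lemma least_coeff:
  fixes p :: "complex poly"
  assumes "p \<noteq> 0"
  defines "m \<equiv> LEAST i. coeff p i \<noteq> 0"
  shows "coeff p m \<noteq> 0" "\<forall>i<m. coeff p i = 0"
proof -
  have ex: "\<exists>i. coeff p i \<noteq> 0" using assms(1) by (metis coeff_0 poly_eqI)
  show "coeff p m \<noteq> 0" unfolding m_def by (rule LeastI_ex[OF ex])
  show "\<forall>i<m. coeff p i = 0" unfolding m_def using not_less_Least by blast
qed

lemma caseX:
  fixes \<phi> \<psi> :: "nat \<Rightarrow> complex"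
  assumes X: "pw N w \<psi> * pp N \<phi> = pp N \<psi> * pw N w \<phi>"
    and inj: "\<And>i j. i < N \<Longrightarrow> j < N \<Longrightarrow> w^i = w^j \<Longrightarrow> i = j"
    and nz: "pp N \<phi> \<noteq> 0"
  shows "\<exists>l. \<forall>j<N. \<psi> j = l * \<phi> j"
proof -
  define a where "a = (LEAST i. coeff (pp N \<phi>) i \<noteq> 0)"
  have a1: "coeff (pp N \<phi>) a \<noteq> 0" and a2: "\<forall>i<a. coeff (pp N \<phi>) i = 0"
    unfolding a_def by (rule least_coeff[OF nz])+
  have aN: "a < N" using a1 by (simp add: coeff_pp split: if_splits)
  define l where "l = \<psi> a / \<phi> a"
  define g where "g j = \<psi> j - l * \<phi> j" for j
  have e1: "pw N w g = pw N w \<psi> - smult l (pw N w \<phi>)"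
    by (rule poly_eqI) (simp add: coeff_pw g_def algebra_simps)
  have e2: "pp N g = pp N \<psi> - smult l (pp N \<phi>)"
    by (rule poly_eqI) (simp add: coeff_pp g_def algebra_simps)
  have Xg: "pw N w g * pp N \<phi> = pp N g * pw N w \<phi>"
  proof -
    have "pw N w g * pp N \<phi> = pw N w \<psi> * pp N \<phi> - smult l (pw N w \<phi> * pp N \<phi>)"
      unfolding e1 by (simp add: left_diff_distrib)
    moreover have "pp N g * pw N w \<phi> = pp N \<psi> * pw N w \<phi> - smult l (pp N \<phi> * pw N w \<phi>)"
      unfolding e2 by (simp add: left_diff_distrib)
    ultimately show ?thesis using X by (simp add: mult.commute)
  qed
  have "pp N g = 0"
  proof (rule ccontr)
    assume gnz: "pp N g \<noteq> 0"
    define b where "b = (LEAST i. coeff (pp N g) i \<noteq> 0)"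
    have b1: "coeff (pp N g) b \<noteq> 0" and b2: "\<forall>i<b. coeff (pp N g) i = 0"
      unfolding b_def by (rule least_coeff[OF gnz])+
    have bN: "b < N" using b1 by (simp add: coeff_pp split: if_splits)
    have "coeff (pw N w g * pp N \<phi>) (b + a) = coeff (pp N g) b * w^b * coeff (pp N \<phi>) a"
      using coeff_mult_low[of b "pw N w g" a "pp N \<phi>"] b2 a2 by (simp add: coeff_pw_pp)
    moreover have "coeff (pp N g * pw N w \<phi>) (b + a) = coeff (pp N g) b * (coeff (pp N \<phi>) a * w^a)"
      using coeff_mult_low[of b "pp N g" a "pw N w \<phi>"] b2 a2 by (simp add: coeff_pw_pp)
    ultimately have "coeff (pp N g) b * w^b * coeff (pp N \<phi>) a = coeff (pp N g) b * (coeff (pp N \<phi>) a * w^a)"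
      using Xg by metis
    hence "w^b = w^a" using a1 b1 by (simp add: mult_ac)
    hence "b = a" using inj bN aN by blast
    moreover have "coeff (pp N g) a = 0" using aN a1 by (simp add: coeff_pp g_def l_def)
    ultimately show False using b1 by simp
  qed
  hence "\<forall>j<N. g j = 0" by (simp add: pp_zero_iff)
  thus ?thesis unfolding g_def by auto
qed

lemma caseY:
  fixes \<phi> \<psi> :: "nat \<Rightarrow> complex"
  assumes Y: "pr N \<phi> * pw N w \<psi> = smult (w^N) (prw N w \<phi> * pp N \<psi>)"
    and weq: "\<And>i j. w^i = w^j \<longleftrightarrow> i mod (2*N-1) = j mod (2*N-1)"
    and N1: "N \<ge> 1"
    and nz1: "pp N \<phi> \<noteq> 0" and nz2: "pp N \<psi> \<noteq> 0"
  shows "\<forall>j<N. 0 < j \<longrightarrow> \<phi> j = 0 \<and> \<psi> j = 0"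
proof -
  have prnz: "pr N \<phi> \<noteq> 0" using nz1 by (simp add: pp_zero_iff pr_zero_iff)
  define i0 where "i0 = (LEAST i. coeff (pr N \<phi>) i \<noteq> 0)"
  have i1: "coeff (pr N \<phi>) i0 \<noteq> 0" and i2: "\<forall>i<i0. coeff (pr N \<phi>) i = 0"
    unfolding i0_def by (rule least_coeff[OF prnz])+
  have i0N: "i0 < N" using i1 by (simp add: coeff_pr split: if_splits)
  define a where "a = (LEAST i. coeff (pp N \<psi>) i \<noteq> 0)"
  have a1: "coeff (pp N \<psi>) a \<noteq> 0" and a2: "\<forall>i<a. coeff (pp N \<psi>) i = 0"
    unfolding a_def by (rule least_coeff[OF nz2])+
  have aN: "a < N" using a1 by (simp add: coeff_pp split: if_splits)
  have "coeff (pr N \<phi> * pw N w \<psi>) (i0 + a) = coeff (pr N \<phi>) i0 * (coeff (pp N \<psi>) a * w^a)"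
    using coeff_mult_low[of i0 "pr N \<phi>" a "pw N w \<psi>"] i2 a2 by (simp add: coeff_pw_pp)
  moreover have "coeff (smult (w^N) (prw N w \<phi> * pp N \<psi>)) (i0 + a)
      = w^N * (coeff (pr N \<phi>) i0 * w^i0 * coeff (pp N \<psi>) a)"
    using coeff_mult_low[of i0 "prw N w \<phi>" a "pp N \<psi>"] i2 a2 by (simp add: coeff_prw_pr)
  ultimately have "coeff (pr N \<phi>) i0 * (coeff (pp N \<psi>) a * w^a)
      = w^N * (coeff (pr N \<phi>) i0 * w^i0 * coeff (pp N \<psi>) a)"
    using Y by metis
  hence "w^a = w^N * w^i0" using i1 a1 by (simp add: mult_ac)
  hence "w^a = w^(N+i0)" by (simp add: power_add)
  hence am: "a mod (2*N-1) = (N+i0) mod (2*N-1)" using weq by blast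
  have i0v: "i0 = N - 1" and a0: "a = 0"
  proof -
    have "N + i0 = 2*N-1"
    proof (rule ccontr)
      assume "N + i0 \<noteq> 2*N-1"
      hence "N + i0 < 2*N-1" using i0N by linarith
      hence "a = N + i0" using am aN N1 by simp
      thus False using aN by simp
    qed
    thus "i0 = N - 1" by simp
    show "a = 0" using am aN \<open>N + i0 = 2*N-1\<close> N1 by simp
  qed
  have phi0: "\<phi> j = 0" if "j < N" "0 < j" for j
  proof -
    have "coeff (pr N \<phi>) (N-1-j) = 0" using i2 i0v that by simp
    moreover have "coeff (pr N \<phi>) (N-1-j) = cnj (\<phi> j)" using that by (simp add: coeff_pr)
    ultimately show ?thesis by simp
  qed
  define d where "d = degree (pp N \<psi>)"
  have d1: "coeff (pp N \<psi>) d \<noteq> 0" using nz2 d_def by simp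
  have d2: "\<forall>j>d. coeff (pp N \<psi>) j = 0" using d_def coeff_eq_0 by blast
  have dN: "d < N" using d1 by (simp add: coeff_pp split: if_splits)
  have degpr: "degree (pr N \<phi>) = N - 1"
    using deg_pr[of N \<phi>] le_degree[OF i1] i0v by simp
  have h2: "\<forall>j>N-1. coeff (pr N \<phi>) j = 0" using degpr coeff_eq_0 by metis
  have h2': "\<forall>j>N-1. coeff (prw N w \<phi>) j = 0" using h2 by (simp add: coeff_prw_pr)
  have d2': "\<forall>j>d. coeff (pw N w \<psi>) j = 0" using d2 by (simp add: coeff_pw_pp)
  have "coeff (pr N \<phi> * pw N w \<psi>) (N-1 + d) = coeff (pr N \<phi>) (N-1) * (coeff (pp N \<psi>) d * w^d)"
    using coeff_mult_high[of "N-1" "pr N \<phi>" d "pw N w \<psi>"] h2 d2' by (simp add: coeff_pw_pp)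
  moreover have "coeff (smult (w^N) (prw N w \<phi> * pp N \<psi>)) (N-1 + d)
      = w^N * (coeff (pr N \<phi>) (N-1) * w^(N-1) * coeff (pp N \<psi>) d)"
    using coeff_mult_high[of "N-1" "prw N w \<phi>" d "pp N \<psi>"] h2' d2 by (simp add: coeff_prw_pr)
  ultimately have "coeff (pr N \<phi>) (N-1) * (coeff (pp N \<psi>) d * w^d)
      = w^N * (coeff (pr N \<phi>) (N-1) * w^(N-1) * coeff (pp N \<psi>) d)"
    using Y by metis
  moreover have "coeff (pr N \<phi>) (N-1) \<noteq> 0" using i1 i0v by simp
  ultimately have "w^d = w^N * w^(N-1)" using d1 by (simp add: mult_ac)
  moreover have "N + (N - 1) = 2*N-1" using N1 by simp
  ultimately have "w^d = w^(2*N-1)" by (metis power_add)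
  hence "d mod (2*N-1) = 0" using weq by simp
  hence d0: "d = 0" using dN by simp
  have psi0: "\<psi> j = 0" if "j < N" "0 < j" for j
    using d2 d0 that by (metis coeff_pp)
  show ?thesis using phi0 psi0 by blast
qed

theorem mainTheorem13:
  fixes N :: nat and \<phi> \<psi> :: "nat \<Rightarrow> complex"
  assumes "N \<ge> 1"
    and "\<forall>k \<le> 2*N - 2. cmod (trig_poly N \<phi> (real k / real (2*N - 1)))
                        = cmod (trig_poly N \<psi> (real k / real (2*N - 1)))"
    and "\<forall>k \<le> 2*N - 2.
           cmod (trig_poly N \<phi> (real (k+1) / real (2*N - 1)) - trig_poly N \<phi> (real k / real (2*N - 1)))
         = cmod (trig_poly N \<psi> (real (k+1) / real (2*N - 1)) - trig_poly N \<psi> (real k / real (2*N - 1)))"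
  shows "\<exists>c::complex. cmod c = 1 \<and> (\<forall>j<N. \<psi> j = c * \<phi> j)"
proof -
  define M where "M = 2*N-1"
  define w where "w = exp (2 * of_real pi * \<i> / of_nat M)"
  have M1: "M \<ge> 1" using assms(1) M_def by simp
  have weq: "\<And>j k. w^j = w^k \<longleftrightarrow> j mod M = k mod M"
    unfolding w_def by (rule om_eq[OF M1])
  have wn: "\<And>j. cmod (w^j) = 1" unfolding w_def by (rule om_norm)
  have wM: "w^M = 1" using weq[of M 0] by simp
  have inj: "inj_on (\<lambda>k. w^k) {..<M}" by (auto simp: inj_on_def weq)
  have tp: "\<And>f k. trig_poly N f (real k / real (2*N-1)) = poly (pp N f) (w^k)"
    using trig_poly_pp[OF M1] unfolding M_def w_def by simp
  define Q where "Q f k = poly (pp N f) (w^k)" for f k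
  have H1: "cmod (Q \<phi> k) = cmod (Q \<psi> k)" if "k < M" for k
    using assms(2) that unfolding Q_def tp M_def by auto
  have H1': "cmod (Q \<phi> (k+1)) = cmod (Q \<psi> (k+1))" if "k < M" for k
  proof (cases "k + 1 < M")
    case True thus ?thesis using H1 by blast
  next
    case False
    hence "k + 1 = M" using that by simp
    hence "w^(k+1) = w^0" using wM by simp
    hence "\<And>f. Q f (k+1) = Q f 0" unfolding Q_def by simp
    thus ?thesis using H1[of 0] M1 by simp
  qed
  have H2: "cmod (Q \<phi> (k+1) - Q \<phi> k) = cmod (Q \<psi> (k+1) - Q \<psi> k)" if "k < M" for k
    using assms(3) that unfolding Q_def tp M_def by auto
  have prQ: "\<And>f k. poly (pr N f) (w^k) = (w^k)^(N-1) * cnj (Q f k)"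
    unfolding Q_def by (rule poly_pr_circle[OF wn])
  have degM: "N - 1 + (N - 1) < M" using M_def assms(1) by simp
  have degT: "degree (pp N f * pr N f) < M" for f
    using degree_mult_le[of "pp N f" "pr N f"] deg_pp[of N f] deg_pr[of N f] degM by linarith
  have T: "pp N \<phi> * pr N \<phi> = pp N \<psi> * pr N \<psi>"
  proof (rule poly_eq_roots[OF degT degT _ inj], intro allI impI)
    fix k assume "k < M"
    have v: "poly (pp N f * pr N f) (w^k) = (w^k)^(N-1) * complex_of_real (cmod (Q f k) ^ 2)" for f
    proof -
      have n: "Q f k * cnj (Q f k) = complex_of_real (cmod (Q f k) ^ 2)" by (simp only: complex_norm_square)
      have "poly (pp N f * pr N f) (w^k) = Q f k * ((w^k)^(N-1) * cnj (Q f k))"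
        by (simp add: prQ Q_def[symmetric])
      also have "\<dots> = (w^k)^(N-1) * (Q f k * cnj (Q f k))" by (simp add: mult_ac)
      also have "\<dots> = (w^k)^(N-1) * complex_of_real (cmod (Q f k) ^ 2)" by (simp only: n)
      finally show ?thesis .
    qed
    show "poly (pp N \<phi> * pr N \<phi>) (w^k) = poly (pp N \<psi> * pr N \<psi>) (w^k)"
      unfolding v using H1[OF \<open>k < M\<close>] by simp
  qed
  define c where "c = w^N"
  have cw: "c * w^(N-1) = 1"
  proof -
    have "N + (N - 1) = M" using M_def assms(1) by simp
    thus ?thesis using wM unfolding c_def by (metis power_add)
  qed
  define Sp where "Sp f = pw N w f * pr N f + smult c (pp N f * prw N w f)" for f
  have degS: "degree (Sp f) < M" for f
  proof -
    have "degree (pw N w f * pr N f) < M"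
      using degree_mult_le[of "pw N w f" "pr N f"] deg_pw[of N w f] deg_pr[of N f] degM by linarith
    moreover have "degree (smult c (pp N f * prw N w f)) < M"
      using degree_mult_le[of "pp N f" "prw N w f"] deg_pp[of N f] deg_prw[of N w f] degM
        degree_smult_le[of c "pp N f * prw N w f"] by linarith
    ultimately have "max (degree (pw N w f * pr N f)) (degree (smult c (pp N f * prw N w f))) < M"
      by (simp only: max_less_iff_conj)
    thus ?thesis unfolding Sp_def
      by (rule le_less_trans[OF degree_add_le_max])
  qed
  have S: "Sp \<phi> = Sp \<psi>"
  proof (rule poly_eq_roots[OF degS degS _ inj], intro allI impI)
    fix k assume "k < M"
    have v: "poly (Sp f) (w^k) = (w^k)^(N-1) *
       complex_of_real (cmod (Q f (k+1))^2 + cmod (Q f k)^2 - cmod (Q f (k+1) - Q f k)^2)" for f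
    proof -
      have p1: "poly (pw N w f) (w^k) = Q f (k+1)" unfolding Q_def poly_pw by simp
      have p2: "poly (prw N w f) (w^k) = (w^k)^(N-1) * w^(N-1) * cnj (Q f (k+1))"
      proof -
        have "w * w^k = w^(k+1)" by simp
        moreover have "(w^(k+1))^(N-1) = (w^k)^(N-1) * w^(N-1)" by (simp add: power_mult_distrib)
        ultimately show ?thesis unfolding poly_prw using prQ[of f "k+1"] by simp
      qed
      have "poly (Sp f) (w^k) = Q f (k+1) * ((w^k)^(N-1) * cnj (Q f k))
          + c * (Q f k * ((w^k)^(N-1) * w^(N-1) * cnj (Q f (k+1))))"
        unfolding Sp_def by (simp add: p1 p2 prQ Q_def[symmetric])
      also have "\<dots> = (w^k)^(N-1) * (Q f (k+1) * cnj (Q f k) + Q f k * cnj (Q f (k+1)) * (c * w^(N-1)))"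
        by algebra
      also have "\<dots> = (w^k)^(N-1) * (Q f (k+1) * cnj (Q f k) + Q f k * cnj (Q f (k+1)))"
        using cw by simp
      finally show ?thesis using cnj_id by simp
    qed
    show "poly (Sp \<phi>) (w^k) = poly (Sp \<psi>) (w^k)"
      unfolding v using H1[OF \<open>k < M\<close>] H1'[OF \<open>k < M\<close>] H2[OF \<open>k < M\<close>] by simp
  qed
  have K: "(pw N w \<psi> * pp N \<phi> - pp N \<psi> * pw N w \<phi>) *
         (pr N \<phi> * pw N w \<psi> - smult c (prw N w \<phi> * pp N \<psi>)) = 0"
    by (rule key_product[OF T S[unfolded Sp_def]])
  show ?thesis
  proof (cases "pp N \<phi> = 0 \<or> pp N \<psi> = 0")
    case True
    hence "pp N \<phi> * pr N \<phi> = 0 \<or> pp N \<psi> * pr N \<psi> = 0" by auto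
    hence "pp N \<phi> * pr N \<phi> = 0 \<and> pp N \<psi> * pr N \<psi> = 0" using T by auto
    hence "(\<forall>j<N. \<phi> j = 0) \<and> (\<forall>j<N. \<psi> j = 0)"
      by (auto simp: pp_zero_iff pr_zero_iff)
    thus ?thesis by (intro exI[of _ 1]) auto
  next
    case False
    hence nz1: "pp N \<phi> \<noteq> 0" and nz2: "pp N \<psi> \<noteq> 0" by auto
    from K have "pw N w \<psi> * pp N \<phi> = pp N \<psi> * pw N w \<phi> \<or>
        pr N \<phi> * pw N w \<psi> = smult c (prw N w \<phi> * pp N \<psi>)" by simp
    thus ?thesis
    proof
      assume X: "pw N w \<psi> * pp N \<phi> = pp N \<psi> * pw N w \<phi>"
      have injN: "\<And>i j. i < N \<Longrightarrow> j < N \<Longrightarrow> w^i = w^j \<Longrightarrow> i = j"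
        using weq M_def by auto
      obtain l where l: "\<forall>j<N. \<psi> j = l * \<phi> j" using caseX[OF X injN nz1] by blast
      have e1: "pp N \<psi> = smult l (pp N \<phi>)"
        by (rule poly_eqI) (simp add: coeff_pp l)
      have e2: "pr N \<psi> = smult (cnj l) (pr N \<phi>)"
        by (rule poly_eqI) (simp add: coeff_pr l)
      have "pp N \<psi> * pr N \<psi> = smult (l * cnj l) (pp N \<phi> * pr N \<phi>)"
        by (simp only: e1 e2 mult_smult_left mult_smult_right smult_smult mult.commute)
      hence PP: "smult (l * cnj l) (pp N \<phi> * pr N \<phi>) = pp N \<phi> * pr N \<phi>"
        using T by simp
      moreover have "pp N \<phi> * pr N \<phi> \<noteq> 0" using nz1 by (simp add: pp_zero_iff pr_zero_iff)
      moreover have "smult (l * cnj l - 1) (pp N \<phi> * pr N \<phi>) = 0"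
        using PP by (simp add: smult_diff_left)
      ultimately have "l * cnj l = 1" by simp
      hence "complex_of_real (cmod l ^ 2) = 1" by (simp only: complex_norm_square)
      hence "cmod l ^ 2 = 1" by (simp only: of_real_eq_1_iff)
      hence "cmod l = 1" by (smt (verit) norm_ge_zero power2_eq_1_iff)
      thus ?thesis using l by blast
    next
      assume Y: "pr N \<phi> * pw N w \<psi> = smult c (prw N w \<phi> * pp N \<psi>)"
      have z: "\<forall>j<N. 0 < j \<longrightarrow> \<phi> j = 0 \<and> \<psi> j = 0"
        by (rule caseY[OF Y[unfolded c_def] weq[unfolded M_def] assms(1) nz1 nz2])
      have sum0: "(\<Sum>j<N. f j * 1^j) = f 0" if "\<forall>j<N. 0 < j \<longrightarrow> f j = 0" for f :: "nat \<Rightarrow> complex"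
      proof -
        have "(\<Sum>j<N. f j * 1^j) = (\<Sum>j<N. if j = 0 then f 0 else 0)"
          using that by (intro sum.cong) auto
        thus ?thesis using assms(1) by simp
      qed
      have "Q \<phi> 0 = \<phi> 0" "Q \<psi> 0 = \<psi> 0"
        unfolding Q_def poly_pp using sum0 z by auto
      hence e0: "cmod (\<phi> 0) = cmod (\<psi> 0)" using H1[of 0] M1 by simp
      have "\<phi> 0 \<noteq> 0"
      proof
        assume "\<phi> 0 = 0"
        hence "\<forall>j<N. \<phi> j = 0" using z by (metis neq0_conv)
        thus False using nz1 pp_zero_iff by blast
      qed
      define l where "l = \<psi> 0 / \<phi> 0"
      have "cmod l = 1" using e0 \<open>\<phi> 0 \<noteq> 0\<close> by (metis l_def norm_divide divide_self norm_eq_zero norm_one)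
      moreover have "\<forall>j<N. \<psi> j = l * \<phi> j"
        using z \<open>\<phi> 0 \<noteq> 0\<close> by (auto simp: l_def neq0_conv)
      ultimately show ?thesis by blast
    qed
  qed
qed

end
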